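(* Let $U$ be an $n\times n$ matrix whose entries are Laurent polynomials in $x$ over $\mathbb{C}$, such that $\det U$ is a nonzero constant (independent of $x$); then $U^{-1}$ also has Laurent polynomial entries. The following are equivalent: (i) there exist $n\times n$ matrices $T(x)$, with entries polynomial in $x$, and $S(x^{-1})$, with entries polynomial in $x^{-1}$, both having nonzero constant determinants, such that $U=T(x)\,S^{-1}(x^{-1})$; (ii) there exist $n$ column vectors $v_1(x),\dots,v_n(x)$ with entries polynomial in $x$, linearly independent over $\mathbb{C}(x)$, each satisfying $\mathrm{PP}_\infty\big(U^{-1}(x)v_i(x)\big)=0$. Moreover, when (ii) holds, taking $T$ to be the matrix with columns $v_1,\dots,v_n$ and $S=U^{-1}T$ gives a decomposition as in (i); and in any decomposition as in (i), the degree in $x$ of the entries of $T$ does not exceed the maximal power of $x$ occurring in the entries of $U$ (so the polynomial solutions $v$ of $\mathrm{PP}_\infty(U^{-1}v)=0$ relevant for (i) can be found by solving a finite linear system).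
   Context: For a Laurent polynomial (or vector/matrix of Laurent polynomials) $f(x)=\sum_k f_k x^k$, $\mathrm{PP}_\infty f$ denotes its principal part at $x=\infty$, namely $\sum_{k>0} f_k x^k$, the part containing strictly positive powers of $x$. *)

theory Defs
  imports "HOL-Computational_Algebra.Formal_Laurent_Series" "Jordan_Normal_Form.Determinant"
begin

text \<open>Laurent polynomials in x over the complex numbers are modelled as those formal
 Laurent series (type complex fls, variable x = fls_X) having only finitely many
 nonzero coefficients. (Formal Laurent series already have finitely many negative powers.)\<close>

definition laurent_poly :: "complex fls \<Rightarrow> bool" where
  "laurent_poly f \<longleftrightarrow> (\<exists>N::int. \<forall>k>N. fls_nth f k = 0)"

definition poly_in_x :: "complex fls \<Rightarrow> bool" where
  "poly_in_x f \<longleftrightarrow> laurent_poly f \<and> (\<forall>k<0. fls_nth f k = 0)"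

definition poly_in_xinv :: "complex fls \<Rightarrow> bool" where
  "poly_in_xinv f \<longleftrightarrow> (\<forall>k>0. fls_nth f k = 0)"

definition nonzero_const :: "complex fls \<Rightarrow> bool" where
  "nonzero_const f \<longleftrightarrow> (\<exists>c. c \<noteq> 0 \<and> f = fls_const c)"

definition rat_fun :: "complex fls \<Rightarrow> bool" where
  "rat_fun f \<longleftrightarrow> (\<exists>p q. poly_in_x p \<and> poly_in_x q \<and> q \<noteq> 0 \<and> f = p / q)"

definition PP_inf :: "complex fls \<Rightarrow> complex fls" where
  "PP_inf f = Abs_fls (\<lambda>k. if k > 0 then fls_nth f k else 0)"

definition PP_inf_vec :: "complex fls vec \<Rightarrow> complex fls vec" where
  "PP_inf_vec v = map_vec PP_inf v"

definition entries_satisfy :: "(complex fls \<Rightarrow> bool) \<Rightarrow> nat \<Rightarrow> complex fls mat \<Rightarrow> bool" where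
  "entries_satisfy P n M \<longleftrightarrow> M \<in> carrier_mat n n \<and> (\<forall>i<n. \<forall>j<n. P (M $$ (i,j)))"

definition lin_indep_ratfun :: "nat \<Rightarrow> (nat \<Rightarrow> complex fls vec) \<Rightarrow> bool" where
  "lin_indep_ratfun n v \<longleftrightarrow>
     (\<forall>c. (\<forall>i<n. rat_fun (c i)) \<and> (\<forall>r<n. (\<Sum>i<n. c i * v i $ r) = 0)
          \<longrightarrow> (\<forall>i<n. c i = 0))"

definition TS_decomposition :: "nat \<Rightarrow> complex fls mat \<Rightarrow> complex fls mat \<Rightarrow> complex fls mat \<Rightarrow> bool" where
  "TS_decomposition n U T S \<longleftrightarrow>
     entries_satisfy poly_in_x n T \<and> entries_satisfy poly_in_xinv n S \<and>
     nonzero_const (det T) \<and> nonzero_const (det S) \<and>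
     (\<exists>Sinv \<in> carrier_mat n n. S * Sinv = 1\<^sub>m n \<and> Sinv * S = 1\<^sub>m n \<and> U = T * Sinv)"

definition cond_ii :: "nat \<Rightarrow> complex fls mat \<Rightarrow> (nat \<Rightarrow> complex fls vec) \<Rightarrow> bool" where
  "cond_ii n Uinv v \<longleftrightarrow>
     (\<forall>i<n. v i \<in> carrier_vec n \<and> (\<forall>r<n. poly_in_x (v i $ r))) \<and>
     lin_indep_ratfun n v \<and>
     (\<forall>i<n. PP_inf_vec (Uinv *\<^sub>v v i) = 0\<^sub>v n)"

definition max_xpow :: "nat \<Rightarrow> complex fls mat \<Rightarrow> int" where
  "max_xpow n U = Max {k. \<exists>i<n. \<exists>j<n. fls_nth (U $$ (i,j)) k \<noteq> 0}"

end

theory Submission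
  imports Defs
begin

lemma fls_mult_ub:
  fixes f g :: "'a::{comm_monoid_add,mult_zero} fls"
  assumes "\<forall>k>a. fls_nth f k = 0" "\<forall>k>b. fls_nth g k = 0" "k > a + b"
  shows "fls_nth (f * g) k = 0"
proof -
  have "fls_nth (f * g) k = (\<Sum>i=fls_subdegree f..k - fls_subdegree g. fls_nth f i * fls_nth g (k - i))"
    by (rule fls_times_nth(2))
  also have "\<dots> = 0"
  proof (rule sum.neutral, intro ballI)
    fix i assume "i \<in> {fls_subdegree f..k - fls_subdegree g}"
    show "fls_nth f i * fls_nth g (k - i) = 0"
    proof (cases "i > a")
      case True then show ?thesis using assms(1) by simp
    next
      case False then have "k - i > b" using assms(3) by simp
      then show ?thesis using assms(2) by simp
    qed
  qed
  finally show ?thesis .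
qed

lemma fls_mult_lb:
  fixes f g :: "'a::{comm_monoid_add,mult_zero} fls"
  assumes "\<forall>k<a. fls_nth f k = 0" "\<forall>k<b. fls_nth g k = 0" "k < a + b"
  shows "fls_nth (f * g) k = 0"
proof (cases "f = 0 \<or> g = 0")
  case True then show ?thesis by auto
next
  case False
  then have "a \<le> fls_subdegree f" "b \<le> fls_subdegree g"
    using assms by (auto intro!: fls_subdegree_geI)
  then show ?thesis using assms(3) by (intro fls_times_nth_eq0) simp
qed

lemma laurent_poly_0[simp]: "laurent_poly 0" unfolding laurent_poly_def by auto
lemma laurent_poly_1[simp]: "laurent_poly 1" unfolding laurent_poly_def
  by (rule exI[of _ 0]) simp
lemma laurent_poly_const[simp]: "laurent_poly (fls_const c)" unfolding laurent_poly_def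
  by (rule exI[of _ 0]) simp
lemma laurent_poly_add: "laurent_poly f \<Longrightarrow> laurent_poly g \<Longrightarrow> laurent_poly (f + g)"
  unfolding laurent_poly_def by (metis add.right_neutral fls_plus_nth max.strict_boundedE)
lemma laurent_poly_uminus: "laurent_poly f \<Longrightarrow> laurent_poly (- f)"
  unfolding laurent_poly_def by auto
lemma laurent_poly_mult: "laurent_poly f \<Longrightarrow> laurent_poly g \<Longrightarrow> laurent_poly (f * g)"
  unfolding laurent_poly_def using fls_mult_ub by blast

lemma xinv_0[simp]: "poly_in_xinv 0" unfolding poly_in_xinv_def by auto
lemma xinv_1[simp]: "poly_in_xinv 1" unfolding poly_in_xinv_def by auto
lemma xinv_const[simp]: "poly_in_xinv (fls_const c)" unfolding poly_in_xinv_def by auto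
lemma xinv_add: "poly_in_xinv f \<Longrightarrow> poly_in_xinv g \<Longrightarrow> poly_in_xinv (f + g)"
  unfolding poly_in_xinv_def by auto
lemma xinv_uminus: "poly_in_xinv f \<Longrightarrow> poly_in_xinv (- f)"
  unfolding poly_in_xinv_def by auto
lemma xinv_mult: "poly_in_xinv f \<Longrightarrow> poly_in_xinv g \<Longrightarrow> poly_in_xinv (f * g)"
  unfolding poly_in_xinv_def using fls_mult_ub[of 0 f 0 g] by auto

lemma px_0[simp]: "poly_in_x 0" unfolding poly_in_x_def by auto
lemma px_1[simp]: "poly_in_x 1" unfolding poly_in_x_def by auto
lemma px_add: "poly_in_x f \<Longrightarrow> poly_in_x g \<Longrightarrow> poly_in_x (f + g)"
  unfolding poly_in_x_def by (auto simp: laurent_poly_add)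
lemma px_uminus: "poly_in_x f \<Longrightarrow> poly_in_x (- f)"
  unfolding poly_in_x_def by (auto simp: laurent_poly_uminus)
lemma px_mult: "poly_in_x f \<Longrightarrow> poly_in_x g \<Longrightarrow> poly_in_x (f * g)"
  unfolding poly_in_x_def using fls_mult_lb[of 0 f 0 g] by (auto simp: laurent_poly_mult)

lemma det_closed:
  fixes P :: "'a::comm_ring_1 \<Rightarrow> bool"
  assumes P0: "P 0" and P1: "P 1" and Padd: "\<And>a b. P a \<Longrightarrow> P b \<Longrightarrow> P (a + b)"
    and Pmult: "\<And>a b. P a \<Longrightarrow> P b \<Longrightarrow> P (a * b)" and Pneg: "\<And>a. P a \<Longrightarrow> P (- a)"
    and A: "A \<in> carrier_mat n n" and ent: "\<forall>i<n. \<forall>j<n. P (A $$ (i,j))"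
  shows "P (det A)"
proof -
  have sum: "P (sum f S)" if "\<And>x. x \<in> S \<Longrightarrow> P (f x)" for f and S :: "'b set"
    using that by (induction S rule: infinite_finite_induct) (auto simp: P0 Padd)
  have prod: "P (prod f S)" if "\<And>x. x \<in> S \<Longrightarrow> P (f x)" for f and S :: "'b set"
    using that by (induction S rule: infinite_finite_induct) (auto simp: P1 Pmult)
  have sg: "P (signof p)" for p :: "nat \<Rightarrow> nat"
    by (cases p rule: sign_cases) (auto simp: P1 Pneg)
  show ?thesis unfolding det_def'[OF A]
  proof (rule sum)
    fix p assume "p \<in> {p. p permutes {0..<n}}"
    then have "\<And>i. i \<in> {0..<n} \<Longrightarrow> p i < n" by (auto dest: permutes_in_image)
    then show "P (signof p * (\<Prod>i = 0..<n. A $$ (i, p i)))"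
      by (intro Pmult sg prod) (use ent in auto)
  qed
qed


lemma adj_closed:
  fixes P :: "'a::comm_ring_1 \<Rightarrow> bool"
  assumes P0: "P 0" and P1: "P 1" and Padd: "\<And>a b. P a \<Longrightarrow> P b \<Longrightarrow> P (a + b)"
    and Pmult: "\<And>a b. P a \<Longrightarrow> P b \<Longrightarrow> P (a * b)" and Pneg: "\<And>a. P a \<Longrightarrow> P (- a)"
    and A: "A \<in> carrier_mat n n" and ent: "\<forall>i<n. \<forall>j<n. P (A $$ (i,j))"
    and ij: "i < n" "j < n"
  shows "P (adj_mat A $$ (i,j))"
proof -
  have pw: "P ((-1) ^ k)" for k by (induction k) (auto intro: Pmult Pneg P1)
  have D: "mat_delete A j i \<in> carrier_mat (n-1) (n-1)" using mat_delete_carrier[OF A] .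
  have "\<forall>a<n-1. \<forall>b<n-1. P (mat_delete A j i $$ (a,b))"
    using A ent by (auto simp: mat_delete_def)
  then have "P (det (mat_delete A j i))"
    by (intro det_closed[OF P0 P1 Padd Pmult Pneg D]) auto
  moreover have "adj_mat A $$ (i,j) = (-1)^(j+i) * det (mat_delete A j i)"
    using A ij by (simp add: adj_mat_def cofactor_def)
  ultimately show ?thesis using pw Pmult by simp
qed

lemma inverse_via_adj:
  fixes A B :: "'a::field mat"
  assumes A: "A \<in> carrier_mat n n" and B: "B \<in> carrier_mat n n" and AB: "A * B = 1\<^sub>m n"
  shows "det A \<noteq> 0" "B = inverse (det A) \<cdot>\<^sub>m adj_mat A"
proof -
  have "det A * det B = 1" using det_mult[OF A B] AB by simp
  then show dA: "det A \<noteq> 0" by auto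
  have adj: "adj_mat A \<in> carrier_mat n n" using adj_mat(1)[OF A] .
  have "adj_mat A = adj_mat A * (A * B)" using adj AB by simp
  also have "\<dots> = (adj_mat A * A) * B" using adj A B by (simp add: assoc_mult_mat)
  also have "\<dots> = det A \<cdot>\<^sub>m B" using adj_mat(3)[OF A] B
    by (simp add: mult_smult_assoc_mat[OF one_carrier_mat B])
  finally have "inverse (det A) \<cdot>\<^sub>m adj_mat A = inverse (det A) \<cdot>\<^sub>m (det A \<cdot>\<^sub>m B)" by simp
  also have "\<dots> = B" using dA by (auto intro!: eq_matI)
  finally show "B = inverse (det A) \<cdot>\<^sub>m adj_mat A" by simp
qed

lemma inverse_exists:
  fixes A :: "'a::field mat"
  assumes A: "A \<in> carrier_mat n n" and dA: "det A \<noteq> 0"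
  shows "\<exists>B \<in> carrier_mat n n. A * B = 1\<^sub>m n \<and> B * A = 1\<^sub>m n"
proof (intro bexI conjI)
  let ?B = "inverse (det A) \<cdot>\<^sub>m adj_mat A"
  have adj: "adj_mat A \<in> carrier_mat n n" using adj_mat(1)[OF A] .
  show "?B \<in> carrier_mat n n" using adj by simp
  have "A * ?B = inverse (det A) \<cdot>\<^sub>m (A * adj_mat A)" using A adj by (simp add: mult_smult_distrib)
  also have "\<dots> = 1\<^sub>m n" using adj_mat(2)[OF A] dA by (auto intro!: eq_matI)
  finally show "A * ?B = 1\<^sub>m n" .
  have "?B * A = inverse (det A) \<cdot>\<^sub>m (adj_mat A * A)" using A adj by (simp add: mult_smult_assoc_mat)
  also have "\<dots> = 1\<^sub>m n" using adj_mat(3)[OF A] dA by (auto intro!: eq_matI)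
  finally show "?B * A = 1\<^sub>m n" .
qed

lemma part1:
  assumes U: "entries_satisfy laurent_poly n U"
    and "Uinv \<in> carrier_mat n n" and "U * Uinv = 1\<^sub>m n" and dU: "nonzero_const (det U)"
  shows "entries_satisfy laurent_poly n Uinv"
proof -
  have Uc: "U \<in> carrier_mat n n" and ent: "\<forall>i<n. \<forall>j<n. laurent_poly (U $$ (i,j))"
    using U unfolding entries_satisfy_def by auto
  have eq: "Uinv = inverse (det U) \<cdot>\<^sub>m adj_mat U" using inverse_via_adj[OF Uc assms(2,3)] by simp
  have lp: "laurent_poly (inverse (det U))" using dU
    unfolding nonzero_const_def by (auto simp: fls_inverse_const)
  show ?thesis unfolding entries_satisfy_def
  proof (intro conjI allI impI)
    show "Uinv \<in> carrier_mat n n" by fact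
    fix i j assume ij: "i < n" "j < n"
    have "laurent_poly (adj_mat U $$ (i,j))"
      by (rule adj_closed[OF _ _ laurent_poly_add laurent_poly_mult laurent_poly_uminus Uc ent ij]) auto
    then show "laurent_poly (Uinv $$ (i,j))"
      using ij Uc adj_mat(1)[OF Uc] by (simp add: eq laurent_poly_mult lp)
  qed
qed


definition hP :: "complex poly \<Rightarrow> complex fls" where
  "hP p = fps_to_fls (fps_of_poly p)"

lemma hP_nth: "fls_nth (hP p) k = (if k < 0 then 0 else coeff p (nat k))"
  unfolding hP_def by simp

lemma hP_hom: "inj_comm_ring_hom hP"
  by unfold_locales (auto simp: hP_def fps_of_poly_add fps_of_poly_mult fls_times_fps_to_fls
      fps_of_poly_eq_iff[of _ 0, simplified])

lemma hP_px: "poly_in_x (hP p)"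
  unfolding poly_in_x_def laurent_poly_def hP_nth
  by (intro conjI exI[of _ "int (degree p)"]) (auto simp: coeff_eq_0)

lemma px_hP: assumes "poly_in_x f" shows "\<exists>p. hP p = f"
proof -
  obtain N where N: "\<forall>k>N. fls_nth f k = 0" "\<forall>k<0. fls_nth f k = 0"
    using assms unfolding poly_in_x_def laurent_poly_def by auto
  define p where "p = Abs_poly (\<lambda>i. if i \<le> nat N then fls_nth f (int i) else 0)"
  have "hP p = f"
  proof (rule fls_eqI)
    fix k
    show "fls_nth (hP p) k = fls_nth f k"
      using N by (auto simp: hP_nth p_def coeff_Abs_poly_If_le)
  qed
  then show ?thesis by blast
qed

lemma lin_indep_det:
  assumes T: "T \<in> carrier_mat n n" and ent: "\<forall>i<n. \<forall>j<n. poly_in_x (T $$ (i,j))"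
    and li: "\<forall>c. (\<forall>i<n. rat_fun (c i)) \<and> (\<forall>r<n. (\<Sum>i<n. c i * T $$ (r,i)) = 0) \<longrightarrow> (\<forall>i<n. c i = 0)"
  shows "det T \<noteq> 0"
proof
  assume dT: "det T = 0"
  interpret h: inj_comm_ring_hom hP by (rule hP_hom)
  define P where "P = mat n n (\<lambda>(i,j). SOME p. hP p = T $$ (i,j))"
  have P: "P \<in> carrier_mat n n" unfolding P_def by simp
  have PT: "hP (P $$ (i,j)) = T $$ (i,j)" if "i < n" "j < n" for i j
    using that px_hP[of "T $$ (i,j)"] ent unfolding P_def by (auto intro: someI_ex)
  have "map_mat hP P = T" using T PT P by (auto intro!: eq_matI)
  then have "hP (det P) = 0" using dT h.hom_det by metis
  then have "det P = 0" by simp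
  then obtain w where w: "w \<in> carrier_vec n" "w \<noteq> 0\<^sub>v n" "P *\<^sub>v w = 0\<^sub>v n"
    using det_0_iff_vec_prod_zero[OF P] by auto
  define c where "c i = hP (w $ i)" for i
  have rf: "rat_fun (hP p)" for p unfolding rat_fun_def
    by (rule exI[of _ "hP p"], rule exI[of _ 1]) (simp add: hP_px)
  have "\<forall>i<n. rat_fun (c i)" unfolding c_def using rf by blast
  moreover have "\<forall>r<n. (\<Sum>i<n. c i * T $$ (r,i)) = 0"
  proof (intro allI impI)
    fix r assume r: "r < n"
    have "(\<Sum>i<n. c i * T $$ (r,i)) = (\<Sum>i<n. hP (P $$ (r,i) * w $ i))"
      using r PT by (auto simp: c_def h.hom_mult intro!: sum.cong)
    also have "\<dots> = hP ((P *\<^sub>v w) $ r)"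
      using r P w(1) by (simp add: h.hom_sum scalar_prod_def lessThan_atLeast0)
    also have "\<dots> = 0" using w(3) r by simp
    finally show "(\<Sum>i<n. c i * T $$ (r,i)) = 0" .
  qed
  ultimately have "\<forall>i<n. c i = 0" using li by blast
  then have "w = 0\<^sub>v n" using w(1) by (auto simp: c_def intro!: eq_vecI)
  with w(2) show False by simp
qed


lemma PP_inf_nth: "fls_nth (PP_inf f) k = (if k > 0 then fls_nth f k else 0)"
  unfolding PP_inf_def by (rule nth_Abs_fls_lower_bound[of 0]) auto

lemma PP_inf_0_iff: "PP_inf f = 0 \<longleftrightarrow> poly_in_xinv f"
  unfolding poly_in_xinv_def fls_eq_iff[of "PP_inf f"] PP_inf_nth by auto

lemma laurent_finite: assumes "laurent_poly f" shows "finite {k. fls_nth f k \<noteq> 0}"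
proof -
  obtain N where N: "\<forall>k>N. fls_nth f k = 0" using assms unfolding laurent_poly_def by auto
  obtain L where L: "\<forall>k<L. fls_nth f k = 0" by (elim fls_nth_vanishes_belowE)
  have "{k. fls_nth f k \<noteq> 0} \<subseteq> {L..N}" using N L by (auto simp: not_less[symmetric])
  then show ?thesis by (rule finite_subset) simp
qed

lemma max_xpow_bound:
  assumes U: "entries_satisfy laurent_poly n U" and ij: "i < n" "j < n" and k: "k > max_xpow n U"
  shows "fls_nth (U $$ (i,j)) k = 0"
proof (rule ccontr)
  assume nz: "fls_nth (U $$ (i,j)) k \<noteq> 0"
  let ?K = "{k. \<exists>i<n. \<exists>j<n. fls_nth (U $$ (i,j)) k \<noteq> 0}"
  have "?K = (\<Union>i\<in>{..<n}. \<Union>j\<in>{..<n}. {k. fls_nth (U $$ (i,j)) k \<noteq> 0})" by auto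
  moreover have "finite \<dots>" using U laurent_finite unfolding entries_satisfy_def by auto
  ultimately have "finite ?K" by simp
  moreover have "k \<in> ?K" using nz ij by auto
  ultimately have "k \<le> max_xpow n U" unfolding max_xpow_def by (rule Max_ge)
  with k show False by simp
qed

lemma det_const_inv:
  fixes A B :: "complex fls mat"
  assumes A: "A \<in> carrier_mat n n" and B: "B \<in> carrier_mat n n" and AB: "A * B = 1\<^sub>m n"
    and dA: "nonzero_const (det A)"
  shows "det B = fls_const (inverse (fls_nth (det A) 0))" "fls_nth (det A) 0 \<noteq> 0"
proof -
  obtain c where c: "c \<noteq> 0" "det A = fls_const c" using dA unfolding nonzero_const_def by auto
  have "det A * det B = 1" using det_mult[OF A B] AB by simp
  then have "det B = inverse (det A)" by (metis inverse_unique)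
  then show "det B = fls_const (inverse (fls_nth (det A) 0))" using c by (simp add: fls_inverse_const)
  show "fls_nth (det A) 0 \<noteq> 0" using c by simp
qed

lemma part_i_ii:
  assumes U: "entries_satisfy laurent_poly n U"
    and Ui: "Uinv \<in> carrier_mat n n" "U * Uinv = 1\<^sub>m n" "Uinv * U = 1\<^sub>m n"
    and TS: "TS_decomposition n U T S"
  shows "cond_ii n Uinv (\<lambda>i. col T i)"
    "\<forall>i<n. \<forall>j<n. \<forall>k. fls_nth (T $$ (i,j)) k \<noteq> 0 \<longrightarrow> k \<le> max_xpow n U"
proof -
  have Uc: "U \<in> carrier_mat n n" using U unfolding entries_satisfy_def by auto
  have Tc: "T \<in> carrier_mat n n" and Tp: "\<forall>i<n. \<forall>j<n. poly_in_x (T $$ (i,j))"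
    and Sc: "S \<in> carrier_mat n n" and Sp: "\<forall>i<n. \<forall>j<n. poly_in_xinv (S $$ (i,j))"
    and dT: "nonzero_const (det T)"
    using TS unfolding TS_decomposition_def entries_satisfy_def by auto
  obtain Sinv where Sinv: "Sinv \<in> carrier_mat n n" "S * Sinv = 1\<^sub>m n" "Sinv * S = 1\<^sub>m n" "U = T * Sinv"
    using TS unfolding TS_decomposition_def by auto
  have US: "U * S = T"
  proof -
    have "U * S = T * (Sinv * S)" using Sinv Tc Sc by (simp add: assoc_mult_mat)
    then show ?thesis using Sinv Tc by simp
  qed
  have UiT: "Uinv * T = S"
  proof -
    have "Uinv * T = Uinv * (U * S)" using US by simp
    also have "\<dots> = (Uinv * U) * S" using assoc_mult_mat[OF Ui(1) Uc Sc] by simp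
    finally have "Uinv * T = (Uinv * U) * S" .
    then show ?thesis using Ui Sc by simp
  qed
  have dT0: "det T \<noteq> 0" using dT unfolding nonzero_const_def by auto
  obtain Tinv where Tinv: "Tinv \<in> carrier_mat n n" "T * Tinv = 1\<^sub>m n" "Tinv * T = 1\<^sub>m n"
    using inverse_exists[OF Tc dT0] by auto
  have c1: "\<forall>i<n. col T i \<in> carrier_vec n \<and> (\<forall>r<n. poly_in_x (col T i $ r))"
    using Tc Tp by auto
  have c3: "\<forall>i<n. PP_inf_vec (Uinv *\<^sub>v col T i) = 0\<^sub>v n"
  proof (intro allI impI)
    fix i assume i: "i < n"
    have "Uinv *\<^sub>v col T i = col S i" using UiT col_mult2[OF Ui(1) Tc i] by simp
    then show "PP_inf_vec (Uinv *\<^sub>v col T i) = 0\<^sub>v n"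
      unfolding PP_inf_vec_def using Sc Sp i by (auto intro!: eq_vecI simp: PP_inf_0_iff)
  qed
  have c2: "lin_indep_ratfun n (\<lambda>i. col T i)" unfolding lin_indep_ratfun_def
    proof (intro allI impI)
      fix c i assume c: "(\<forall>i<n. rat_fun (c i)) \<and> (\<forall>r<n. (\<Sum>i<n. c i * col T i $ r) = 0)" and i: "i < n"
      define cv where "cv = vec n c"
      have cv: "cv \<in> carrier_vec n" unfolding cv_def by simp
      have "T *\<^sub>v cv = 0\<^sub>v n"
      proof (rule eq_vecI)
        fix r assume r: "r < dim_vec (0\<^sub>v n :: complex fls vec)"
        have "(T *\<^sub>v cv) $ r = (\<Sum>j<n. c j * col T j $ r)"
          using r Tc by (auto simp: cv_def scalar_prod_def lessThan_atLeast0 mult.commute intro!: sum.cong)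
        then show "(T *\<^sub>v cv) $ r = 0\<^sub>v n $ r" using c r by simp
      qed (use Tc in simp)
      then have "Tinv *\<^sub>v (T *\<^sub>v cv) = 0\<^sub>v n" using Tinv(1) by (auto intro!: eq_vecI simp: scalar_prod_def)
      then have "cv = 0\<^sub>v n" using Tinv Tc cv by (simp add: assoc_mult_mat_vec[symmetric])
      then show "c i = 0" using i unfolding cv_def by (metis index_vec index_zero_vec(1))
    qed
  show "cond_ii n Uinv (\<lambda>i. col T i)" unfolding cond_ii_def using c1 c2 c3 by blast
  show "\<forall>i<n. \<forall>j<n. \<forall>k. fls_nth (T $$ (i,j)) k \<noteq> 0 \<longrightarrow> k \<le> max_xpow n U"
  proof (intro allI impI)
    fix i j k assume ij: "i < n" "j < n" and nz: "fls_nth (T $$ (i,j)) k \<noteq> 0"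
    show "k \<le> max_xpow n U"
    proof (rule ccontr)
      assume "\<not> k \<le> max_xpow n U"
      then have k: "k > max_xpow n U + 0" by simp
      have "T $$ (i,j) = (\<Sum>l<n. U $$ (i,l) * S $$ (l,j))"
        using US[symmetric] ij Uc Sc by (auto simp: scalar_prod_def lessThan_atLeast0 intro!: sum.cong)
      then have "fls_nth (T $$ (i,j)) k = (\<Sum>l<n. fls_nth (U $$ (i,l) * S $$ (l,j)) k)"
        by (simp add: fls_nth_sum)
      also have "\<dots> = 0"
      proof (rule sum.neutral, intro ballI)
        fix l assume "l \<in> {..<n}"
        then have l: "l < n" by simp
        show "fls_nth (U $$ (i,l) * S $$ (l,j)) k = 0"
          by (rule fls_mult_ub[OF _ _ k]) (use max_xpow_bound[OF U ij(1) l] Sp l ij in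
               \<open>auto simp: poly_in_xinv_def\<close>)
      qed
      finally show False using nz by simp
    qed
  qed
qed


lemma part_ii_i:
  assumes U: "entries_satisfy laurent_poly n U" and dU: "nonzero_const (det U)"
    and Ui: "Uinv \<in> carrier_mat n n" "U * Uinv = 1\<^sub>m n" "Uinv * U = 1\<^sub>m n"
    and v: "cond_ii n Uinv v"
  shows "TS_decomposition n U (mat_of_cols n (map v [0..<n])) (Uinv * mat_of_cols n (map v [0..<n]))"
proof -
  define T where "T = mat_of_cols n (map v [0..<n])"
  define S where "S = Uinv * T"
  have Uc: "U \<in> carrier_mat n n" using U unfolding entries_satisfy_def by auto
  have vc: "\<forall>i<n. v i \<in> carrier_vec n \<and> (\<forall>r<n. poly_in_x (v i $ r))"
    and li: "lin_indep_ratfun n v" and pp: "\<forall>i<n. PP_inf_vec (Uinv *\<^sub>v v i) = 0\<^sub>v n"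
    using v unfolding cond_ii_def by auto
  have Tc: "T \<in> carrier_mat n n" unfolding T_def using mat_of_cols_carrier(1)[of n "map v [0..<n]"] by simp
  have Tij: "T $$ (r,i) = v i $ r" if "r < n" "i < n" for r i
    unfolding T_def using that by (simp add: mat_of_cols_index)
  have Tp: "\<forall>i<n. \<forall>j<n. poly_in_x (T $$ (i,j))" using vc Tij by auto
  have Sc: "S \<in> carrier_mat n n" unfolding S_def using Ui Tc by simp
  have Sp: "\<forall>i<n. \<forall>j<n. poly_in_xinv (S $$ (i,j))"
  proof (intro allI impI)
    fix r i assume ri: "r < n" "i < n"
    have "col T i = v i" unfolding T_def using ri vc by simp
    then have "S $$ (r,i) = (Uinv *\<^sub>v v i) $ r"
      using ri Ui Tc unfolding S_def by (metis col_mult2 index_col Sc[unfolded S_def] carrier_matD)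
    moreover have "PP_inf ((Uinv *\<^sub>v v i) $ r) = 0"
      using pp ri Ui unfolding PP_inf_vec_def
      by (metis carrier_matD(1) dim_mult_mat_vec index_map_vec(1) index_zero_vec(1))
    ultimately show "poly_in_xinv (S $$ (r,i))" by (simp add: PP_inf_0_iff)
  qed
  have dT0: "det T \<noteq> 0"
  proof (rule lin_indep_det[OF Tc Tp])
    show "\<forall>c. (\<forall>i<n. rat_fun (c i)) \<and> (\<forall>r<n. (\<Sum>i<n. c i * T $$ (r,i)) = 0) \<longrightarrow> (\<forall>i<n. c i = 0)"
    proof (rule allI, rule impI)
      fix c assume c: "(\<forall>i<n. rat_fun (c i)) \<and> (\<forall>r<n. (\<Sum>i<n. c i * T $$ (r,i)) = 0)"
      have "\<forall>r<n. (\<Sum>i<n. c i * v i $ r) = 0"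
        using c Tij by (metis (no_types, lifting) lessThan_iff sum.cong)
      then show "\<forall>i<n. c i = 0" using li c unfolding lin_indep_ratfun_def by blast
    qed
  qed
  have dTx: "poly_in_x (det T)"
    by (rule det_closed[OF px_0 px_1 px_add px_mult px_uminus Tc Tp])
  have dSx: "poly_in_xinv (det S)"
    by (rule det_closed[OF xinv_0 xinv_1 xinv_add xinv_mult xinv_uminus Sc Sp])
  have dUi: "det Uinv = fls_const (inverse (fls_nth (det U) 0))" "fls_nth (det U) 0 \<noteq> 0"
    using det_const_inv[OF Uc Ui(1,2) dU] by auto
  define c where "c = fls_nth (det U) 0"
  have dS: "det S = fls_const (inverse c) * det T"
    unfolding S_def using det_mult[OF Ui(1) Tc] dUi c_def by simp
  then have "det T = fls_const c * det S" using dUi(2) c_def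
    by (simp add: mult.assoc[symmetric])
  then have "poly_in_xinv (det T)" using dSx by (simp add: xinv_mult)
  then have "\<forall>k. k \<noteq> 0 \<longrightarrow> fls_nth (det T) k = 0" using dTx
    unfolding poly_in_x_def poly_in_xinv_def by (metis linorder_neqE)
  then have dTc: "det T = fls_const (fls_nth (det T) 0)" by (intro fls_eqI) auto
  have t0: "fls_nth (det T) 0 \<noteq> 0" using dT0 dTc by (metis fls_const_0)
  have ndT: "nonzero_const (det T)" unfolding nonzero_const_def using dTc t0 by blast
  have ndS: "nonzero_const (det S)" unfolding nonzero_const_def
    using dS dTc t0 dUi(2) c_def by (intro exI[of _ "inverse c * fls_nth (det T) 0"]) (simp, metis fls_const_mult_const)
  obtain Tinv where Tinv: "Tinv \<in> carrier_mat n n" "T * Tinv = 1\<^sub>m n" "Tinv * T = 1\<^sub>m n"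
    using inverse_exists[OF Tc dT0] by auto
  define Sinv where "Sinv = Tinv * U"
  have Sic: "Sinv \<in> carrier_mat n n" unfolding Sinv_def using Tinv Uc by simp
  have TU: "Tinv * U \<in> carrier_mat n n" using Tinv(1) Uc by simp
  have e1: "S * Sinv = 1\<^sub>m n"
  proof -
    have "S * Sinv = Uinv * (T * (Tinv * U))" unfolding S_def Sinv_def
      using assoc_mult_mat[OF Ui(1) Tc TU] .
    also have "T * (Tinv * U) = (T * Tinv) * U" using assoc_mult_mat[OF Tc Tinv(1) Uc] by simp
    finally show ?thesis using Tinv Ui Uc by simp
  qed
  have e2: "Sinv * S = 1\<^sub>m n"
  proof -
    have UT: "Uinv * T \<in> carrier_mat n n" using Ui(1) Tc by simp
    have "Sinv * S = Tinv * (U * (Uinv * T))" unfolding S_def Sinv_def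
      using assoc_mult_mat[OF Tinv(1) Uc UT] .
    also have "U * (Uinv * T) = (U * Uinv) * T" using assoc_mult_mat[OF Uc Ui(1) Tc] by simp
    finally show ?thesis using Tinv Ui Tc by simp
  qed
  have e3: "U = T * Sinv"
  proof -
    have "T * Sinv = (T * Tinv) * U" unfolding Sinv_def
      using assoc_mult_mat[OF Tc Tinv(1) Uc] by simp
    then show ?thesis using Tinv Uc by simp
  qed
  have "TS_decomposition n U T S"
    unfolding TS_decomposition_def entries_satisfy_def
    using Tc Tp Sc Sp ndT ndS Sic e1 e2 e3 by blast
  then show ?thesis unfolding T_def S_def .
qed

theorem mainTheorem4:
  fixes n :: nat and U Uinv :: "complex fls mat"
  assumes "entries_satisfy laurent_poly n U"
    and "nonzero_const (det U)"
    and "Uinv \<in> carrier_mat n n" and "U * Uinv = 1\<^sub>m n" and "Uinv * U = 1\<^sub>m n"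
  shows "entries_satisfy laurent_poly n Uinv
    \<and> ((\<exists>T S. TS_decomposition n U T S) \<longleftrightarrow> (\<exists>v. cond_ii n Uinv v))
    \<and> (\<forall>v. cond_ii n Uinv v \<longrightarrow>
          TS_decomposition n U (mat_of_cols n (map v [0..<n])) (Uinv * mat_of_cols n (map v [0..<n])))
    \<and> (\<forall>T S. TS_decomposition n U T S \<longrightarrow>
          (\<forall>i<n. \<forall>j<n. \<forall>k. fls_nth (T $$ (i,j)) k \<noteq> 0 \<longrightarrow> k \<le> max_xpow n U))"
  using part1[OF assms(1,3,4,2)] part_i_ii[OF assms(1,3,4,5)] part_ii_i[OF assms] by blast

end
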